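(* Let $\mathbb{E},\mathbb{F}$ be Euclidean spaces, $A\colon\mathbb{E}\to\mathbb{F}$ linear, $b\in\operatorname{Range}A$, $c\in\mathbb{E}$, and $\mathcal{K}\subseteq\mathbb{E}$ a closed convex cone with nonempty interior. Consider the primal problem $\inf\{\langle c,x\rangle: Ax=b,\ x\in\mathcal{K}\}$ and its dual $\sup\{\langle b,y\rangle: c-A^*y\in\mathcal{K}^*\}$. Suppose the primal problem is feasible with finite optimal value $\mathrm{val}$, and define $$\operatorname{cond}:=\min_{y\in\mathbb{F}:\ \|y\|=1}\ \max\{\operatorname{dist}_{\mathcal{K}^*}(A^*y),\ \langle b,y\rangle\}.$$ If $\operatorname{cond}\neq 0$, then every optimal solution $y$ of the dual problem satisfies $$\|y\|\le\frac{\max\{\|c\|,-\mathrm{val}\}}{\operatorname{cond}}.$$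
   Context: $\mathcal{K}^*:=\{z\in\mathbb{E}:\langle x,z\rangle\ge 0\ \forall x\in\mathcal{K}\}$ is the dual cone, $A^*$ the adjoint of $A$, and $\operatorname{dist}_{\mathcal{K}^*}(w)$ the Euclidean distance from $w$ to $\mathcal{K}^*$. *)

theory Defs
  imports "HOL-Analysis.Analysis"
begin

definition dual_cone :: "'a::real_inner set \<Rightarrow> 'a set" where
  "dual_cone K = {z. \<forall>x\<in>K. x \<bullet> z \<ge> 0}"

end

theory Submission
  imports Defs
begin

theorem mainTheorem6:
  fixes A :: "'a::euclidean_space \<Rightarrow> 'b::euclidean_space"
    and b :: 'b and c :: 'a and K :: "'a set" and y :: 'b
  assumes lin: "linear A"
    and b_range: "b \<in> range A"
    and K_closed: "closed K" and K_convex: "convex K" and K_cone: "cone K"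
    and K_int: "interior K \<noteq> {}"
    and feas: "{x. A x = b \<and> x \<in> K} \<noteq> {}"
    and finite_val: "bdd_below ((\<lambda>x. c \<bullet> x) ` {x. A x = b \<and> x \<in> K})"
    and cond_ne: "(INF z\<in>{z::'b. norm z = 1}.
                     max (infdist (adjoint A z) (dual_cone K)) (b \<bullet> z)) \<noteq> 0"
    and y_feas: "c - adjoint A y \<in> dual_cone K"
    and y_opt: "\<forall>y'. c - adjoint A y' \<in> dual_cone K \<longrightarrow> b \<bullet> y' \<le> b \<bullet> y"
  shows "norm y \<le> max (norm c) (- (INF x\<in>{x. A x = b \<and> x \<in> K}. c \<bullet> x))
                   / (INF z\<in>{z::'b. norm z = 1}.
                        max (infdist (adjoint A z) (dual_cone K)) (b \<bullet> z))"
proof -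
  define F where "F = {x. A x = b \<and> x \<in> K}"
  define val where "val = (INF x\<in>F. c \<bullet> x)"
  define g where "g = (\<lambda>z::'b. max (infdist (adjoint A z) (dual_cone K)) (b \<bullet> z))"
  define cond where "cond = (INF z\<in>{z::'b. norm z = 1}. g z)"
  have adj: "\<And>x z. x \<bullet> adjoint A z = A x \<bullet> z" by (rule adjoint_works[OF lin])
  have val_le: "\<And>x. x \<in> F \<Longrightarrow> val \<le> c \<bullet> x"
    unfolding val_def using finite_val F_def by (intro cInf_lower) auto
  obtain e :: 'b where e: "norm e = 1"
    using nonempty_Basis norm_Basis by blast
  have g_nn: "\<And>z. 0 \<le> g z" unfolding g_def using infdist_nonneg by (metis max.coboundedI1)
  have bdd: "bdd_below (g ` {z. norm z = 1})" using g_nn by (intro bdd_belowI) auto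
  have cond_le: "\<And>z. norm z = 1 \<Longrightarrow> cond \<le> g z"
    unfolding cond_def using bdd by (intro cINF_lower) auto
  have cond_nn: "0 \<le> cond" unfolding cond_def using e g_nn
    by (intro cINF_greatest) auto
  have cond_pos: "0 < cond" using cond_nn cond_ne unfolding cond_def g_def by auto
  have K0: "0 \<in> K" using K_int K_cone interior_subset
    by (metis all_not_in_conv cone_def scale_zero_left subsetD order_refl)
  have dual_ge: "val \<le> b \<bullet> y"
  proof (rule ccontr)
    assume "\<not> val \<le> b \<bullet> y"
    define t where "t = (b \<bullet> y + val) / 2"
    have t1: "b \<bullet> y < t" and t2: "t < val" using \<open>\<not> val \<le> b \<bullet> y\<close> unfolding t_def by auto
    define S where "S = (\<lambda>x. (A x - b, c \<bullet> x - t)) ` K"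
    have convS: "convex S" unfolding S_def convex_def
    proof (clarify)
      fix x1 x2 u v :: real
      fix p1 p2 assume p: "p1 \<in> K" "p2 \<in> K" "0 \<le> u" "0 \<le> v" "u + v = 1"
      hence m: "u *\<^sub>R p1 + v *\<^sub>R p2 \<in> K" using K_convex unfolding convex_def by blast
      have "u *\<^sub>R (A p1 - b, c \<bullet> p1 - t) + v *\<^sub>R (A p2 - b, c \<bullet> p2 - t)
          = (A (u *\<^sub>R p1 + v *\<^sub>R p2) - b, c \<bullet> (u *\<^sub>R p1 + v *\<^sub>R p2) - t)"
      proof -
        have v: "v = 1 - u" using p by simp
        have 1: "u *\<^sub>R (A p1 - b) + v *\<^sub>R (A p2 - b) = A (u *\<^sub>R p1 + v *\<^sub>R p2) - b"
          unfolding v by (simp add: linear_add[OF lin] linear_scale[OF lin] scaleR_diff_right scaleR_diff_left linear_diff[OF lin])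
        have 2: "u * (c \<bullet> p1 - t) + v * (c \<bullet> p2 - t) = c \<bullet> (u *\<^sub>R p1 + v *\<^sub>R p2) - t"
          unfolding v by (simp add: inner_add_right right_diff_distrib left_diff_distrib)
        show ?thesis using 1 2 by simp
      qed
      thus "u *\<^sub>R (A p1 - b, c \<bullet> p1 - t) + v *\<^sub>R (A p2 - b, c \<bullet> p2 - t)
          \<in> (\<lambda>x. (A x - b, c \<bullet> x - t)) ` K"
        by (rule image_eqI[where f="\<lambda>x. (A x - b, c \<bullet> x - t)", OF _ m])
    qed
    have notin: "0 \<notin> S"
    proof
      assume "0 \<in> S"
      then obtain x where "x \<in> K" "A x = b" "c \<bullet> x = t" unfolding S_def
        by (auto simp: zero_prod_def)
      hence "val \<le> t" using val_le unfolding F_def by force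
      thus False using t2 by simp
    qed
    obtain a where a: "a \<noteq> 0" "\<forall>p\<in>S. 0 \<le> a \<bullet> p"
      using separating_hyperplane_set_0[OF convS notin] by blast
    obtain z s where zs: "a = (z, s)" by (cases a)
    have H: "\<And>x. x \<in> K \<Longrightarrow> 0 \<le> z \<bullet> (A x - b) + s * (c \<bullet> x - t)"
      using a(2) zs unfolding S_def by auto
    have H0: "z \<bullet> b + s * t \<le> 0" using H[OF K0] by (simp add: linear_0[OF lin])
    have H1: "0 \<le> z \<bullet> A x + s * (c \<bullet> x)" if x: "x \<in> K" for x
    proof (rule ccontr)
      assume neg: "\<not> 0 \<le> z \<bullet> A x + s * (c \<bullet> x)"
      define q where "q = z \<bullet> A x + s * (c \<bullet> x)"
      define r where "r = z \<bullet> b + s * t"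
      have q: "q < 0" using neg q_def by simp
      define l where "l = (\<bar>r\<bar> + 1) / (- q)"
      have l: "0 \<le> l" using q unfolding l_def by (simp add: divide_nonneg_neg)
      have "l *\<^sub>R x \<in> K" using K_cone x l unfolding cone_def by blast
      from H[OF this] have "0 \<le> l * q - r"
        by (simp add: linear_scale[OF lin] inner_diff_right q_def r_def algebra_simps)
      moreover have "l * q = - (\<bar>r\<bar> + 1)" using q unfolding l_def by simp
      ultimately show False by simp
    qed
    show False
    proof (cases "s > 0")
      case True
      define y' where "y' = - (1 / s) *\<^sub>R z"
      have "c - adjoint A y' \<in> dual_cone K" unfolding dual_cone_def
      proof (clarify)
        fix x assume x: "x \<in> K"
        have "x \<bullet> (c - adjoint A y') = c \<bullet> x + (1/s) * (z \<bullet> A x)"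
          by (simp add: inner_diff_right adj y'_def inner_commute)
        also have "\<dots> = (1/s) * (z \<bullet> A x + s * (c \<bullet> x))" using True by (simp add: field_simps)
        also have "\<dots> \<ge> 0" using H1[OF x] True by simp
        finally show "0 \<le> x \<bullet> (c - adjoint A y')" .
      qed
      hence "b \<bullet> y' \<le> b \<bullet> y" using y_opt by blast
      moreover have "b \<bullet> y' = - (z \<bullet> b) / s" by (simp add: y'_def inner_commute)
      moreover have "- (z \<bullet> b) / s \<ge> t" using H0 True by (simp add: field_simps)
      ultimately show False using t1 by simp
    next
      case False
      show False
      proof (cases "s = 0")
        case True
        hence z0: "z \<noteq> 0" using a zs by (auto simp: zero_prod_def)
        define z' where "z' = (1 / norm z) *\<^sub>R z"
        have nz': "norm z' = 1" using z0 unfolding z'_def by simp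
        have "adjoint A z' \<in> dual_cone K" unfolding dual_cone_def
        proof (clarify)
          fix x assume "x \<in> K"
          from H1[OF this] True have "0 \<le> z \<bullet> A x" by simp
          thus "0 \<le> x \<bullet> adjoint A z'" by (simp add: adj z'_def inner_commute)
        qed
        hence "infdist (adjoint A z') (dual_cone K) = 0" by simp
        moreover have "b \<bullet> z' \<le> 0" using H0 True z0 by (simp add: z'_def inner_commute divide_nonpos_nonneg)
        ultimately have "g z' \<le> 0" unfolding g_def by simp
        thus False using cond_le[OF nz'] cond_pos by simp
      next
        case False
        hence s: "s < 0" using \<open>\<not> s > 0\<close> by simp
        obtain x where x: "A x = b" "x \<in> K" using feas by blast
        have "0 \<le> z \<bullet> b + s * (c \<bullet> x)" using H1[OF x(2)] x(1) by simp
        hence "s * (c \<bullet> x) \<ge> s * t" using H0 by simp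
        hence "c \<bullet> x \<le> t" using s by simp
        moreover have "val \<le> c \<bullet> x" using val_le x unfolding F_def by blast
        ultimately show False using t2 by simp
      qed
    qed
  qed
  have main: "norm y \<le> max (norm c) (- val) / cond"
  proof (cases "y = 0")
    case True
    have "0 \<le> max (norm c) (- val)" by (simp add: le_max_iff_disj)
    thus ?thesis using True cond_pos by simp
  next
    case False
    define n where "n = norm y"
    have n: "0 < n" using False n_def by simp
    define z where "z = - (1 / n) *\<^sub>R y"
    have nz: "norm z = 1" using n unfolding z_def n_def by simp
    have mem: "(1 / n) *\<^sub>R (c - adjoint A y) \<in> dual_cone K"
      using y_feas n unfolding dual_cone_def by (auto simp: inner_commute)
    have linA: "linear (adjoint A)" by (rule adjoint_linear[OF lin])
    have az: "adjoint A z = - (1 / n) *\<^sub>R adjoint A y"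
      unfolding z_def by (simp add: linear_scale[OF linA] linear_neg[OF linA])
    have "infdist (adjoint A z) (dual_cone K) \<le> dist (adjoint A z) ((1 / n) *\<^sub>R (c - adjoint A y))"
      by (rule infdist_le[OF mem])
    also have "\<dots> = norm c / n" using n by (simp add: az dist_norm algebra_simps)
    finally have d: "infdist (adjoint A z) (dual_cone K) \<le> norm c / n" .
    have bz: "b \<bullet> z = - (b \<bullet> y) / n" unfolding z_def by simp
    have "b \<bullet> z \<le> - val / n" using bz dual_ge n by (simp add: divide_right_mono)
    moreover have "norm c / n \<le> max (norm c) (- val) / n" using n by (intro divide_right_mono) auto
    moreover have "- val / n \<le> max (norm c) (- val) / n" using n by (intro divide_right_mono) auto
    ultimately have "g z \<le> max (norm c) (- val) / n" using d unfolding g_def max.bounded_iff by linarith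
    hence "cond \<le> max (norm c) (- val) / n" using cond_le[OF nz] by simp
    thus ?thesis using n cond_pos unfolding n_def[symmetric] by (simp add: field_simps)
  qed
  thus ?thesis unfolding cond_def g_def val_def F_def .
qed

end
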